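(* Let $B_n=\binom{2n}{n}$ for $n\ge0$ and $B_n=0$ for $n<0$, and let $D_m(B;n)=\det(B_{i+j+m})_{i,j=0}^{n-1}$. Then for every integer $m\ge1$: $D_{-m}(B;n)=0$ for $1\le n\le m$, and for $n\ge m+1$ $$D_{-m}(B;n)=(-1)^{\binom{m+1}{2}}\,2^{\,n-m-1}\,p_{m+1}(n-m-1).$$
   Context: For integers $m,n\ge 0$, $p_m(n)=\prod_{1\le i\le j\le m-1}\frac{2n+i+j}{i+j}$ (empty product $=1$). *)

theory Defs
  imports Main "Jordan_Normal_Form.Determinant"
begin

definition B :: "int \<Rightarrow> int" where
  "B k = (if k < 0 then 0 else int ((2 * nat k) choose (nat k)))"

definition D :: "int \<Rightarrow> nat \<Rightarrow> int" where
  "D m n = det (mat n n (\<lambda>(i, j). B (int i + int j + m)))"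

definition p :: "nat \<Rightarrow> nat \<Rightarrow> rat" where
  "p m n = (\<Prod>(i, j)\<in>{(i, j). 1 \<le> i \<and> i \<le> j \<and> j \<le> m - 1}.
              (of_nat (2 * n + i + j) / of_nat (i + j)))"

end

theory Submission imports Defs "HOL-Computational_Algebra.Formal_Power_Series" begin

definition hh :: "nat \<Rightarrow> nat \<Rightarrow> int \<Rightarrow> rat" where
  "hh m j s = (if s < 0 then 0 else (of_int (2*int j - 2*int m) gchoose nat s))"
definition GG :: "nat \<Rightarrow> nat \<Rightarrow> nat \<Rightarrow> rat" where
  "GG m j k = hh m j (int j - int m + int k) + (if 1 \<le> k then hh m j (int j - int m - int k) else 0)"
definition AA :: "nat \<Rightarrow> nat \<Rightarrow> rat" where
  "AA i k = (if k \<le> i then of_nat ((2*i) choose (i-k)) else 0)"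

lemma entry_neg:
  assumes "int i + int j - int m < 0" "i < n"
  shows "(\<Sum>k<n. AA i k * GG m j k) = of_int (B (int i + int j - int m))"
proof -
  have z: "AA i k * GG m j k = 0" for k
    using assms by (auto simp: AA_def GG_def hh_def)
  have "(\<Sum>k<n. AA i k * GG m j k) = 0" by (rule sum.neutral) (simp add: z)
  then show ?thesis using assms by (simp add: B_def)
qed

lemma entry_pos:
  assumes t: "int i + int j - int m \<ge> 0" and i: "i < n"
  shows "(\<Sum>k<n. AA i k * GG m j k) = of_int (B (int i + int j - int m))"
proof -
  define t where "t = int i + int j - int m"
  define T where "T = nat t"
  define b :: rat where "b = of_int (2*int j - 2*int m)"
  define c where "c = (\<lambda>a. (of_nat ((2*i) choose a) :: rat))"
  define f where "f = (\<lambda>a::nat. c a * hh m j (t - int a))"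
  have tT: "t = int T" using t by (simp add: T_def t_def)
  have "of_int (B t) = (of_nat (2*T) gchoose T :: rat)"
    using tT by (simp add: B_def binomial_gbinomial)
  also have "(of_nat (2*T) :: rat) = of_nat (2*i) + b"
    using tT by (simp add: b_def t_def)
  also have "(of_nat (2*i) + b) gchoose T = (\<Sum>a=0..T. (of_nat (2*i) gchoose a) * (b gchoose (T - a)))"
    by (rule gbinomial_Vandermonde[symmetric])
  also have "\<dots> = (\<Sum>a=0..T. f a)"
    by (rule sum.cong, auto simp: f_def c_def hh_def binomial_gbinomial b_def tT nat_diff_distrib)
  also have "\<dots> = (\<Sum>a=0..T+2*i. f a)"
    by (rule sum.mono_neutral_left, auto simp: f_def hh_def tT)
  also have "\<dots> = (\<Sum>a=0..2*i. f a)"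
    by (rule sum.mono_neutral_right, auto simp: f_def c_def)
  also have "\<dots> = (\<Sum>a=0..i. f a) + (\<Sum>a=Suc i..2*i. f a)"
    using sum.ub_add_nat[of 0 i f i] by (simp add: mult_2)
  finally have 1: "of_int (B t) = (\<Sum>a=0..i. f a) + (\<Sum>a=Suc i..2*i. f a)" .
  have 2: "(\<Sum>a=0..i. f a) = (\<Sum>k=0..i. c (i-k) * hh m j (int j - int m + int k))"
  proof (subst sum.atLeastAtMost_rev, rule sum.cong)
    fix x assume "x \<in> {0..i}"
    then have "t - int (i + 0 - x) = int j - int m + int x" by (simp add: t_def of_nat_diff)
    then show "f (i + 0 - x) = c (i - x) * hh m j (int j - int m + int x)" by (simp add: f_def)
  qed simp
  have 3: "(\<Sum>a=Suc i..2*i. f a) = (\<Sum>k=1..i. c (i-k) * hh m j (int j - int m - int k))"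
  proof -
    have "(\<Sum>a=Suc i..2*i. f a) = (\<Sum>k=1..i. f (k+i))"
      using sum.shift_bounds_cl_nat_ivl[of f 1 i i] by (simp add: mult_2)
    also have "\<dots> = (\<Sum>k=1..i. c (i-k) * hh m j (int j - int m - int k))"
    proof (rule sum.cong)
      fix k assume "k \<in> {1..i}"
      then have "k + i \<le> 2*i" "2*i - (k+i) = i - k" by auto
      then have "c (k+i) = c (i-k)" unfolding c_def using binomial_symmetric[of "k+i" "2*i"] by simp
      moreover have "t - int (k+i) = int j - int m - int k" by (simp add: t_def)
      ultimately show "f (k+i) = c (i-k) * hh m j (int j - int m - int k)"
        by (simp only: f_def)
    qed auto
    finally show ?thesis .
  qed
  have 4: "(\<Sum>k<n. AA i k * GG m j k) = (\<Sum>k=0..i. AA i k * GG m j k)"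
    by (rule sum.mono_neutral_right, insert i, auto simp: AA_def)
  also have "\<dots> = (\<Sum>k=0..i. c (i-k) * hh m j (int j - int m + int k))
     + (\<Sum>k=0..i. c (i-k) * (if 1 \<le> k then hh m j (int j - int m - int k) else 0))"
    by (simp add: AA_def GG_def c_def sum.distrib[symmetric] algebra_simps)
  also have "(\<Sum>k=0..i. c (i-k) * (if 1 \<le> k then hh m j (int j - int m - int k) else 0))
     = (\<Sum>k=1..i. c (i-k) * hh m j (int j - int m - int k))"
    by (rule sum.mono_neutral_cong_right, auto)
  finally have "(\<Sum>k<n. AA i k * GG m j k) = of_int (B t)" unfolding 1 2 3 .
  then show ?thesis by (simp only: t_def)
qed

lemma hh_low: "hh m (u+m) s = (if s<0 then 0 else of_nat ((2*u) choose nat s))"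
proof -
  have "(of_int (2*int (u+m) - 2*int m) :: rat) = of_nat (2*u)" by simp
  then show ?thesis unfolding hh_def by (simp only: binomial_gbinomial)
qed

lemma hh_high: assumes "j < m"
  shows "hh m j s = (if s<0 then 0 else (- of_nat (2*(m-j))) gchoose nat s)"
proof -
  have "2*int j - 2*int m = - int (2*(m-j))" using assms by linarith
  then have "(of_int (2*int j - 2*int m) :: rat) = - of_nat (2*(m-j))"
    by (metis of_int_minus of_int_of_nat_eq)
  then show ?thesis by (simp only: hh_def)
qed

lemma GG_low_zero: assumes "u < k" shows "GG m (u+m) k = 0"
proof -
  have e1: "int (u+m) - int m + int k = int (u+k)" by simp
  have "(2*u) choose (u+k) = 0" using assms by (intro binomial_eq_0) simp
  then have a: "hh m (u+m) (int (u+m) - int m + int k) = 0"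
    unfolding e1 hh_low nat_int by simp
  have b: "hh m (u+m) (int (u+m) - int m - int k) = 0"
    using assms unfolding hh_low by simp
  show ?thesis unfolding GG_def a b by simp
qed

lemma GG_low_diag: "GG m (u+m) u = (if u = 0 then 1 else 2)"
proof -
  have e1: "int (u+m) - int m - int u = int 0" "int (u+m) - int m + int u = int (2*u)" by simp_all
  have a: "hh m (u+m) (int (u+m) - int m - int u) = 1"
    unfolding e1 hh_low nat_int by simp
  have b: "hh m (u+m) (int (u+m) - int m + int u) = 1"
    unfolding e1 hh_low nat_int by simp
  show ?thesis unfolding GG_def a b by simp
qed

lemma GG_high: assumes "j < m"
  shows "GG m j k = (-1)^(k + (m-j)) * of_nat ((k + (m-j-1)) choose (2*(m-j-1)+1))"
proof -
  define r where "r = m - j"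
  have r: "r \<ge> 1" "int j - int m = - int r" using assms by (auto simp: r_def)
  have 0: "(if 1 \<le> k then hh m j (int j - int m - int k) else 0) = 0"
    using r assms by (auto simp: hh_high)
  show ?thesis
  proof (cases "k < r")
    case True
    then have "hh m j (int j - int m + int k) = 0" using r assms by (simp add: hh_high)
    moreover have "(k + (r-1)) choose (2*(r-1)+1) = 0" using True by (simp add: binomial_eq_0)
    ultimately show ?thesis using 0 by (simp add: GG_def r_def)
  next
    case False
    define s where "s = k - r"
    have ks: "k = s + r" using False by (simp add: s_def)
    have "hh m j (int j - int m + int k) = ((- of_nat (2*r)) gchoose s)"
      using r ks assms by (simp add: hh_high r_def)
    also have "\<dots> = (-1)^s * (of_nat (2*r) + of_nat s - 1 gchoose s)"
      by (rule gbinomial_minus)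
    also have "(of_nat (2*r) + of_nat s - 1 :: rat) = of_nat (k + (r-1))"
      using r ks by (simp add: of_nat_diff)
    also have "(of_nat (k + (r-1)) gchoose s :: rat) = of_nat ((k + (r-1)) choose (2*(r-1)+1))"
    proof -
      have "(k + (r-1)) choose s = (k + (r-1)) choose ((k + (r-1)) - s)"
        by (rule binomial_symmetric) (use ks in simp)
      also have "(k + (r-1)) - s = 2*(r-1)+1" using ks r by simp
      finally show ?thesis by (metis binomial_gbinomial)
    qed
    also have "((-1)::rat)^s = (-1)^(k+r)"
    proof -
      have "k + r = s + 2*r" using ks by simp
      then show ?thesis by (simp add: power_add power_mult)
    qed
    finally show ?thesis using 0 by (simp add: GG_def r_def)
  qed
qed



lemma det_scale:
  fixes e :: "nat \<Rightarrow> nat \<Rightarrow> 'a::comm_ring_1"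
  shows "det (mat n n (\<lambda>(i,j). f i * g j * e i j)) = (\<Prod>i<n. f i) * (\<Prod>j<n. g j) * det (mat n n (\<lambda>(i,j). e i j))"
proof -
  let ?P = "{p. p permutes {0..<n}}"
  have "det (mat n n (\<lambda>(i,j). f i * g j * e i j)) = (\<Sum>p\<in>?P. signof p * (\<Prod>i=0..<n. f i * g (p i) * e i (p i)))"
    by (subst det_def'[of _ n]) auto
  also have "\<dots> = (\<Sum>p\<in>?P. (\<Prod>i<n. f i) * (\<Prod>j<n. g j) * (signof p * (\<Prod>i=0..<n. e i (p i))))"
  proof (rule sum.cong[OF refl])
    fix p assume "p \<in> ?P"
    then have p: "p permutes {0..<n}" by simp
    have "(\<Prod>i=0..<n. f i * g (p i) * e i (p i)) = (\<Prod>i=0..<n. f i) * (\<Prod>i=0..<n. g (p i)) * (\<Prod>i=0..<n. e i (p i))"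
      by (simp add: prod.distrib)
    also have "(\<Prod>i=0..<n. g (p i)) = (\<Prod>i=0..<n. g i)"
      using prod.permute[OF p, of g] by (simp add: comp_def)
    finally show "signof p * (\<Prod>i=0..<n. f i * g (p i) * e i (p i)) = (\<Prod>i<n. f i) * (\<Prod>j<n. g j) * (signof p * (\<Prod>i=0..<n. e i (p i)))"
      by (simp add: atLeast0LessThan ac_simps)
  qed
  also have "\<dots> = (\<Prod>i<n. f i) * (\<Prod>j<n. g j) * (\<Sum>p\<in>?P. signof p * (\<Prod>i=0..<n. e i (p i)))"
    by (simp add: sum_distrib_left)
  also have "(\<Sum>p\<in>?P. signof p * (\<Prod>i=0..<n. e i (p i))) = det (mat n n (\<lambda>(i,j). e i j))"
    by (subst det_def'[of _ n]) auto
  finally show ?thesis .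
qed

definition NN :: "(nat \<Rightarrow> 'a::comm_ring_1) \<Rightarrow> nat \<Rightarrow> 'a \<Rightarrow> 'a" where
  "NN a q x = (\<Prod>l<q. (x - a l))"

lemma NN_Suc: "NN a (Suc q) x = (x - a q) * NN a q x"
  by (simp add: NN_def)

lemma vdm:
  fixes w :: "nat \<Rightarrow> 'a::idom"
  shows "det (mat m m (\<lambda>(j,c). NN a (m-1-j) (w c))) = (\<Prod>c<m. \<Prod>c'\<in>{c<..<m}. (w c - w c'))"
proof (induction m)
  case 0
  then show ?case by simp
next
  case (Suc m)
  define V where "V = mat (Suc m) (Suc m) (\<lambda>(j,c). NN a (Suc m - 1 - j) (w c))"
  define L where "L = mat (Suc m) (Suc m) (\<lambda>(j,k). if k = j then 1 else if k = Suc j then - (w m - a (m - Suc j)) else (0::'a))"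
  define W where "W = mat m m (\<lambda>(j,c). 1 * (w c - w m) * NN a (m-1-j) (w c))"
  define R where "R = mat 1 m (\<lambda>_. (1::'a))"
  define Oone where "Oone = mat 1 1 (\<lambda>_. (1::'a))"
  have V: "V \<in> carrier_mat (Suc m) (Suc m)" and L: "L \<in> carrier_mat (Suc m) (Suc m)"
    by (auto simp: V_def L_def)
  have detL: "det L = 1"
  proof -
    have "det L = prod_list (diag_mat L)"
      by (rule det_upper_triangular[OF _ L]) (auto simp: L_def)
    also have "\<dots> = 1" unfolding prod_list_diag_prod by (simp add: L_def)
    finally show ?thesis .
  qed
  have entry: "(L * V) $$ (j,c) = (if j < m then (w c - w m) * NN a (m-1-j) (w c) else 1)"
    if j: "j < Suc m" and c: "c < Suc m" for j c
  proof -
    have "(L * V) $$ (j,c) = (\<Sum>k=0..<Suc m. L $$ (j,k) * V $$ (k,c))"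
      using j c L V by (simp add: scalar_prod_def)
    also have "\<dots> = (\<Sum>k=0..<Suc m. (if k = j then V $$ (j,c) else 0)
        + (if k = Suc j then - (w m - a (m - Suc j)) * V $$ (Suc j, c) else 0))"
      by (rule sum.cong[OF refl]) (use j in \<open>auto simp: L_def\<close>)
    also have "\<dots> = V $$ (j,c) + (if Suc j < Suc m then - (w m - a (m - Suc j)) * V $$ (Suc j, c) else 0)"
      using j by (simp add: sum.distrib)
    also have "\<dots> = (if j < m then (w c - w m) * NN a (m-1-j) (w c) else 1)"
    proof (cases "j < m")
      case True
      have "m - j = Suc (m - Suc j)" using True by simp
      then have "NN a (m - j) (w c) = (w c - a (m - Suc j)) * NN a (m - Suc j) (w c)"
        by (simp add: NN_Suc)
      then show ?thesis using True c by (simp add: V_def algebra_simps)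
    next
      case False
      then have "j = m" using j by simp
      then show ?thesis using c by (simp add: V_def NN_def)
    qed
    finally show ?thesis .
  qed
  have LV: "L * V = four_block_mat W (0\<^sub>m m 1) R Oone"
  proof (rule eq_matI)
    fix j c assume j: "j < dim_row (four_block_mat W (0\<^sub>m m 1) R Oone)"
      and c: "c < dim_col (four_block_mat W (0\<^sub>m m 1) R Oone)"
    then have j': "j < Suc m" and c': "c < Suc m" by (auto simp: W_def Oone_def)
    show "(L * V) $$ (j,c) = four_block_mat W (0\<^sub>m m 1) R Oone $$ (j,c)"
    proof (cases "c < m")
      case True then show ?thesis
      unfolding entry[OF j' c'] using j' c'
      by (auto simp: four_block_mat_def W_def R_def Oone_def)
    next
      case False then have "c = m" using c' by simp
      then show ?thesis
      unfolding entry[OF j' c'] using j' c'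
      by (auto simp: four_block_mat_def W_def R_def Oone_def)
    qed
  qed (auto simp: L_def V_def W_def Oone_def)
  have "det V = det (L * V)" using det_mult[OF L V] detL by simp
  also have "\<dots> = det W * det Oone"
    unfolding LV by (rule det_four_block_mat_upper_right_zero[of _ m _ 1]) (auto simp: W_def R_def Oone_def)
  also have "det Oone = 1" by (simp add: Oone_def det_single)
  also have "det W = (\<Prod>i<m. 1) * (\<Prod>c<m. (w c - w m)) * det (mat m m (\<lambda>(j,c). NN a (m-1-j) (w c)))"
    unfolding W_def by (rule det_scale)
  also have "det (mat m m (\<lambda>(j,c). NN a (m-1-j) (w c))) = (\<Prod>c<m. \<Prod>c'\<in>{c<..<m}. (w c - w c'))"
    by (rule Suc.IH)
  finally have "det V = (\<Prod>c<m. (w c - w m)) * (\<Prod>c<m. \<Prod>c'\<in>{c<..<m}. (w c - w c'))" by simp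
  also have "\<dots> = (\<Prod>c<Suc m. \<Prod>c'\<in>{c<..<Suc m}. (w c - w c'))"
  proof -
    have "(\<Prod>c<Suc m. \<Prod>c'\<in>{c<..<Suc m}. (w c - w c')) = (\<Prod>c<m. \<Prod>c'\<in>{c<..<Suc m}. (w c - w c'))"
    proof -
      have "{m<..<Suc m} = {}" by auto
      then show ?thesis by (simp only: prod.lessThan_Suc) simp
    qed
    also have "\<dots> = (\<Prod>c<m. (w c - w m) * (\<Prod>c'\<in>{c<..<m}. (w c - w c')))"
    proof (rule prod.cong[OF refl])
      fix c assume "c \<in> {..<m}"
      then have "{c<..<Suc m} = insert m {c<..<m}" by auto
      then show "(\<Prod>c'\<in>{c<..<Suc m}. (w c - w c')) = (w c - w m) * (\<Prod>c'\<in>{c<..<m}. (w c - w c'))"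
        by simp
    qed
    finally show ?thesis by (simp add: prod.distrib)
  qed
  finally show ?case unfolding V_def by simp
qed



lemma gstep: "(a::rat) gchoose Suc k = (a - of_nat k) / of_nat (Suc k) * (a gchoose k)"
proof -
  have "of_nat (Suc k) * (a gchoose Suc k) = (a - of_nat k) * (a gchoose k)"
    using gbinomial_absorption[of k a] gbinomial_absorb_comp[of a k] by simp
  then show ?thesis by (simp add: field_simps del: of_nat_Suc)
qed

lemma gbin_prod: "((y::rat) + of_nat q) gchoose (2*q+1) = y * (\<Prod>l<q. (y^2 - of_nat (l+1)^2)) / fact (2*q+1)"
proof (induction q)
  case 0
  then show ?case by simp
next
  case (Suc q)
  define a where "a = y + of_nat q"
  have e1: "y + of_nat (Suc q) = a + 1" by (simp add: a_def)
  have e2: "2 * Suc q + 1 = Suc (Suc (2*q+1))" by simp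
  have "(y + of_nat (Suc q)) gchoose (2 * Suc q + 1)
      = (a + 1) / of_nat (Suc (Suc (2*q+1))) * (a gchoose Suc (2*q+1))"
    unfolding e1 e2 by (rule gbinomial_factors)
  also have "a gchoose Suc (2*q+1) = (a - of_nat (2*q+1)) / of_nat (Suc (2*q+1)) * (a gchoose (2*q+1))"
    by (rule gstep)
  also have "a gchoose (2*q+1) = y * (\<Prod>l<q. (y^2 - of_nat (l+1)^2)) / fact (2*q+1)"
    unfolding a_def by (rule Suc.IH)
  finally have ch: "(y + of_nat (Suc q)) gchoose (2 * Suc q + 1) = (a + 1) / of_nat (Suc (Suc (2*q+1))) * ((a - of_nat (2*q+1)) / of_nat (Suc (2*q+1)) * (y * (\<Prod>l<q. (y^2 - of_nat (l+1)^2)) / fact (2*q+1)))" .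
  have key: "(a + 1) * (a - of_nat (2*q+1)) = y^2 - of_nat (Suc q)^2"
    by (simp add: a_def algebra_simps power2_eq_square)
  have "(y + of_nat (Suc q)) gchoose (2 * Suc q + 1)
     = (y^2 - of_nat (Suc q)^2) * (y * (\<Prod>l<q. (y^2 - of_nat (l+1)^2)))
        / (of_nat (Suc (Suc (2*q+1))) * of_nat (Suc (2*q+1)) * fact (2*q+1))"
    unfolding ch key[symmetric] by (simp add: field_simps del: of_nat_Suc)
  also have "of_nat (Suc (Suc (2*q+1))) * of_nat (Suc (2*q+1)) * fact (2*q+1) = (fact (2 * Suc q + 1) :: rat)"
    by (simp add: e2 del: of_nat_Suc)
  also have "(y^2 - of_nat (Suc q)^2) * (y * (\<Prod>l<q. (y^2 - of_nat (l+1)^2))) = y * (\<Prod>l<Suc q. (y^2 - of_nat (l+1)^2))"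
    by simp
  finally show ?case .
qed



lemma p_Suc: "p (Suc (Suc m)) K = p (Suc m) K * (\<Prod>i<Suc m. (of_nat (2*K + (i+1) + (m+1)) / of_nat ((i+1) + (m+1))))"
proof -
  define S where "S = (\<lambda>m::nat. {(i,j). 1 \<le> i \<and> i \<le> j \<and> j \<le> m})"
  define h where "h = (\<lambda>(i,j). (of_nat (2 * K + i + j) / of_nat (i + j) :: rat))"
  have pS: "p (Suc mm) K = prod h (S mm)" for mm
    unfolding p_def S_def h_def by simp
  have fin: "finite (S mm)" for mm
  proof -
    have "S mm \<subseteq> {0..mm} \<times> {0..mm}" by (auto simp: S_def)
    then show ?thesis by (rule finite_subset) simp
  qed
  have s1: "S (Suc m) = S m \<union> {(i,j). 1 \<le> i \<and> i \<le> j \<and> j = Suc m}"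
    unfolding S_def by (auto simp: le_Suc_eq)
  have s2: "{(i,j). 1 \<le> i \<and> i \<le> j \<and> j = Suc m} = (\<lambda>i. (i+1, m+1)) ` {..<Suc m}"
  proof (intro Set.set_eqI iffI)
    fix x assume "x \<in> {(i,j). 1 \<le> i \<and> i \<le> j \<and> j = Suc m}"
    then obtain i where x: "x = (i, Suc m)" "1 \<le> i" "i \<le> Suc m" by auto
    then have "x = (\<lambda>i. (i+1, m+1)) (i - 1)" "i - 1 \<in> {..<Suc m}" by auto
    then show "x \<in> (\<lambda>i. (i+1, m+1)) ` {..<Suc m}" by (rule image_eqI)
  qed auto
  have split: "S (Suc m) = S m \<union> (\<lambda>i. (i+1, m+1)) ` {..<Suc m}" using s1 s2 by simp
  have disj: "S m \<inter> (\<lambda>i. (i+1, m+1)) ` {..<Suc m} = {}" by (auto simp: S_def)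
  have "p (Suc (Suc m)) K = prod h (S m) * prod h ((\<lambda>i. (i+1, m+1)) ` {..<Suc m})"
    unfolding pS split by (rule prod.union_disjoint) (use fin disj in auto)
  also have "prod h ((\<lambda>i. (i+1, m+1)) ` {..<Suc m}) = (\<Prod>i<Suc m. h (i+1, m+1))"
    by (subst prod.reindex) (auto simp: inj_on_def)
  finally show ?thesis unfolding pS by (simp add: h_def add_ac)
qed

lemma p_one: "p (Suc 0) K = 1"
  unfolding p_def by (rule prod.neutral) auto

definition Eprod :: "nat \<Rightarrow> nat \<Rightarrow> rat" where
  "Eprod m K = (\<Prod>q<m. (-1)^(q+1) / fact (2*q+1)) * (\<Prod>c<m. (-1)^(K+1+c) * of_nat (K+1+c))
     * (\<Prod>c<m. \<Prod>c'\<in>{c<..<m}. (of_nat (K+1+c)^2 - of_nat (K+1+c')^2))"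

lemma dprod_Suc: "(\<Prod>c<Suc m. \<Prod>c'\<in>{c<..<Suc m}. (w c - w c' :: rat)) = (\<Prod>c<m. \<Prod>c'\<in>{c<..<m}. (w c - w c')) * (\<Prod>c<m. (w c - w m))"
proof -
  have "{m<..<Suc m} = {}" by auto
  then have "(\<Prod>c<Suc m. \<Prod>c'\<in>{c<..<Suc m}. (w c - w c')) = (\<Prod>c<m. \<Prod>c'\<in>{c<..<Suc m}. (w c - w c'))"
    by (simp only: prod.lessThan_Suc) simp
  also have "\<dots> = (\<Prod>c<m. (w c - w m) * (\<Prod>c'\<in>{c<..<m}. (w c - w c')))"
  proof (rule prod.cong[OF refl])
    fix c assume "c \<in> {..<m}"
    then have "{c<..<Suc m} = insert m {c<..<m}" by auto
    then show "(\<Prod>c'\<in>{c<..<Suc m}. (w c - w c')) = (w c - w m) * (\<Prod>c'\<in>{c<..<m}. (w c - w c'))"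
      by simp
  qed
  finally show ?thesis by (simp add: prod.distrib)
qed

lemma E_Suc: "Eprod (Suc m) K = Eprod m K * (((-1)^(m+1) / fact (2*m+1)) * ((-1)^(K+1+m) * of_nat (K+1+m))
   * (\<Prod>c<m. (of_nat (K+1+c)^2 - of_nat (K+1+m)^2)))"
  unfolding Eprod_def dprod_Suc[of "\<lambda>c. of_nat (K+1+c)^2"] by (simp add: ac_simps)

lemma prod_m_minus: "(\<Prod>c<m. (of_nat (m - c) :: rat)) = fact m"
proof (induction m)
  case 0 then show ?case by simp
next
  case (Suc m)
  have "(\<Prod>c<Suc m. (of_nat (Suc m - c) :: rat)) = of_nat (Suc m) * (\<Prod>c<m. of_nat (Suc m - Suc c))"
    by (subst prod.lessThan_Suc_shift) simp
  also have "(\<Prod>c<m. (of_nat (Suc m - Suc c) :: rat)) = fact m" using Suc.IH by simp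
  finally show ?case by simp
qed

lemma H1: "(\<Prod>c<m. (of_nat (K+1+c)^2 - of_nat (K+1+m)^2 :: rat)) = (-1)^m * fact m * (\<Prod>c<m. of_nat (2*K+2+m+c))"
proof -
  have "(\<Prod>c<m. (of_nat (K+1+c)^2 - of_nat (K+1+m)^2 :: rat)) = (\<Prod>c<m. (-1) * (of_nat (m - c) * of_nat (2*K+2+m+c)))"
  proof (rule prod.cong[OF refl])
    fix c assume "c \<in> {..<m}"
    then have "(of_nat (m - c) :: rat) = of_nat m - of_nat c" by (simp add: of_nat_diff)
    then show "(of_nat (K+1+c)^2 - of_nat (K+1+m)^2 :: rat) = (-1) * (of_nat (m - c) * of_nat (2*K+2+m+c))"
      by (simp add: power2_eq_square algebra_simps)
  qed
  also have "\<dots> = (-1)^m * ((\<Prod>c<m. of_nat (m - c)) * (\<Prod>c<m. of_nat (2*K+2+m+c)))"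
    by (simp only: prod.distrib prod_constant card_lessThan)
  finally show ?thesis by (simp only: prod_m_minus mult.assoc)
qed

lemma H2: "(fact (n + k) :: rat) = fact n * (\<Prod>i<k. of_nat (n+1+i))"
proof (induction k)
  case 0 then show ?case by simp
next
  case (Suc k)
  have "(fact (n + Suc k) :: rat) = of_nat (n + Suc k) * fact (n + k)" by simp
  then show ?case using Suc.IH by (simp add: ac_simps)
qed

lemma sgn_lemma: "((-1::rat)^(K+1) * (-1)^(m+1) * (-1)^(K+1+m) * (-1)^m) = (-1)^(m+1)"
proof -
  have "(K+1) + (m+1) + (K+1+m) + m = (m+1) + 2*(K+m+1)" by simp
  then have "((-1::rat)^((K+1) + (m+1) + (K+1+m) + m)) = (-1)^(m+1)"
    by (simp only: power_add power_mult) simp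
  then show ?thesis by (simp add: power_add)
qed

lemma ratio: "(-1)^(K+1) * (((-1)^(m+1) / fact (2*m+1)) * ((-1)^(K+1+m) * of_nat (K+1+m))
   * (\<Prod>c<m. (of_nat (K+1+c)^2 - of_nat (K+1+m)^2)))
   = (-1)^(m+1) * (\<Prod>i<Suc m. (of_nat (2*K + (i+1) + (m+1)) / of_nat ((i+1) + (m+1)) :: rat))"
proof -
  define P where "P = (\<Prod>c<m. (of_nat (2*K+2+m+c) :: rat))"
  have num: "(\<Prod>i<Suc m. (of_nat (2*K + (i+1) + (m+1)) :: rat)) = P * of_nat (2*K+2*m+2)"
    unfolding P_def by (simp add: ac_simps)
  have a1: "(m+1)+(m+1) = 2*m+2" by simp
  have a2: "(\<Prod>i<m+1. of_nat (m+1+1+i)) = (\<Prod>i<Suc m. of_nat((i+1)+(m+1)) :: rat)"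
    by (rule prod.cong) (simp_all add: ac_simps)
  have den0: "(fact (2*m+2) :: rat) = fact (m+1) * (\<Prod>i<Suc m. of_nat ((i+1) + (m+1)))"
    using H2[of "m+1" "m+1"] unfolding a1 a2 .
  have fpos: "(fact (m+1) :: rat) \<noteq> 0" by simp
  have den: "(\<Prod>i<Suc m. (of_nat ((i+1) + (m+1)) :: rat)) = fact (2*m+2) / fact (m+1)"
    using den0 fpos by (simp add: field_simps)
  have f0: "(fact (Suc (2*m+1)) :: rat) = of_nat (Suc (2*m+1)) * fact (2*m+1)" by (rule fact_Suc)
  have f00: "Suc (2*m+1) = 2*m+2" by simp
  have f1: "(fact (2*m+2) :: rat) = of_nat (2*m+2) * fact (2*m+1)"
    using f0 unfolding f00 .
  have f2: "(fact (m+1) :: rat) = of_nat (m+1) * fact m" by simp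
  have "(\<Prod>i<Suc m. (of_nat (2*K + (i+1) + (m+1)) / of_nat ((i+1) + (m+1)) :: rat))
      = P * of_nat (2*K+2*m+2) * fact (m+1) / fact (2*m+2)"
    unfolding prod_dividef num den by simp
  also have "\<dots> = P * of_nat (K+1+m) * fact m / fact (2*m+1)"
  proof -
    have aux: "y \<noteq> 0 \<Longrightarrow> F \<noteq> 0 \<Longrightarrow> P*(2*x)*(y*Fm)/((2*y)*F) = P*x*Fm/F" for y F x Fm :: rat
      by (simp add: field_simps)
    have e1: "(of_nat (2*K+2*m+2) :: rat) = 2 * of_nat (K+1+m)" by simp
    have e2: "(of_nat (2*m+2) :: rat) = 2 * of_nat (m+1)" by simp
    have nz: "(of_nat (m+1) :: rat) \<noteq> 0" "(fact (2*m+1) :: rat) \<noteq> 0" by (simp_all only: of_nat_eq_0_iff fact_nonzero) simp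
    show ?thesis unfolding f1 f2 e1 e2 by (rule aux[OF nz])
  qed
  finally have R: "(\<Prod>i<Suc m. (of_nat (2*K + (i+1) + (m+1)) / of_nat ((i+1) + (m+1)) :: rat))
      = P * of_nat (K+1+m) * fact m / fact (2*m+1)" .
  have L: "(-1)^(K+1) * (((-1)^(m+1) / fact (2*m+1)) * ((-1)^(K+1+m) * of_nat (K+1+m))
   * (\<Prod>c<m. (of_nat (K+1+c)^2 - of_nat (K+1+m)^2)))
     = ((-1::rat)^(K+1) * (-1)^(m+1) * (-1)^(K+1+m) * (-1)^m) * (P * of_nat (K+1+m) * fact m / fact (2*m+1))"
  proof -
    have aux2: "a * ((b / F) * (c * x) * (d * Fm * P)) = (a*b*c*d) * (P*x*Fm/F)" for a b c d F x Fm P :: rat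
      by (simp add: ac_simps)
    show ?thesis unfolding H1 P_def by (rule aux2)
  qed
  show ?thesis unfolding L R sgn_lemma ..
qed

lemma final_id: "(-1)^((K+1)*m) * Eprod m K = (-1)^((m+1) choose 2) * p (m+1) K"
proof (induction m)
  case 0
  then show ?case by (simp add: Eprod_def p_one numeral_2_eq_2)
next
  case (Suc m)
  define X where "X = (((-1)^(m+1) / fact (2*m+1)) * ((-1)^(K+1+m) * of_nat (K+1+m))
   * (\<Prod>c<m. (of_nat (K+1+c)^2 - of_nat (K+1+m)^2 :: rat)))"
  define Q where "Q = (\<Prod>i<Suc m. (of_nat (2*K + (i+1) + (m+1)) / of_nat ((i+1) + (m+1)) :: rat))"
  have e: "(Suc m + 1) choose 2 = ((m+1) choose 2) + (m+1)"
    by (simp add: numeral_2_eq_2)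
  have pw: "(-1::rat)^((K+1)*Suc m) = (-1)^((K+1)*m) * (-1)^(K+1)"
  proof -
    have "(K+1)*Suc m = (K+1)*m + (K+1)" by simp
    then show ?thesis by (simp only: power_add)
  qed
  have pw2: "(-1::rat)^((Suc m + 1) choose 2) = (-1)^((m+1) choose 2) * (-1)^(m+1)"
    by (simp only: e power_add)
  have aux: "a*b*(E*Y) = (a*E)*(b*Y)" for a b E Y :: rat by (simp only: ac_simps)
  have aux2: "(a*P)*(b*Y) = (a*b)*(P*Y)" for a b P Y :: rat by (simp only: ac_simps)
  have r: "(-1)^(K+1) * X = (-1)^(m+1) * Q" unfolding X_def Q_def by (rule ratio)
  have "(-1::rat)^((K+1)*Suc m) * Eprod (Suc m) K = ((-1)^((K+1)*m) * Eprod m K) * ((-1)^(K+1) * X)"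
    unfolding pw E_Suc X_def[symmetric] by (rule aux)
  also have "\<dots> = ((-1)^((m+1) choose 2) * p (m+1) K) * ((-1)^(m+1) * Q)"
    unfolding Suc.IH r ..
  also have "\<dots> = (-1)^((Suc m + 1) choose 2) * p (Suc m + 1) K"
    unfolding pw2 aux2 using p_Suc[of m K] unfolding Q_def[symmetric] by simp
  finally show ?case .
qed

lemma prod_reflect: fixes h :: "nat \<Rightarrow> rat" shows "(\<Prod>j<m. h (m-1-j)) = (\<Prod>j<m. h j)"
proof (induction m)
  case 0 then show ?case by simp
next
  case (Suc m)
  have "(\<Prod>j<Suc m. h (Suc m - 1 - j)) = h (Suc m - 1 - 0) * (\<Prod>i<m. h (Suc m - 1 - Suc i))"
    by (rule prod.lessThan_Suc_shift)
  also have "(\<Prod>i<m. h (Suc m - 1 - Suc i)) = (\<Prod>i<m. h (m - 1 - i))" by simp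
  also have "\<dots> = (\<Prod>i<m. h i)" by (rule Suc.IH)
  finally show ?case by (simp add: ac_simps)
qed

lemma GG_Y: assumes j: "j < m"
  shows "GG m j (K+1+c) = ((-1)^(m-j) / fact (2*(m-1-j)+1)) * ((-1)^(K+1+c) * of_nat (K+1+c))
     * NN (\<lambda>l. of_nat (l+1)^2) (m-1-j) (of_nat (K+1+c)^2)"
proof -
  define k where "k = K+1+c"
  define q where "q = m-1-j"
  have q: "m - j - 1 = q" "m - j = q + 1" using j by (auto simp: q_def)
  have "GG m j k = (-1)^(k + (m-j)) * of_nat ((k + q) choose (2*q+1))"
    using GG_high[OF j, of k] q by simp
  also have "(of_nat ((k + q) choose (2*q+1)) :: rat) = ((of_nat k + of_nat q) gchoose (2*q+1))"
    by (simp add: binomial_gbinomial)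
  also have "\<dots> = of_nat k * (\<Prod>l<q. ((of_nat k)^2 - of_nat (l+1)^2)) / fact (2*q+1)"
    by (rule gbin_prod)
  also have "(\<Prod>l<q. ((of_nat k)^2 - of_nat (l+1)^2)) = NN (\<lambda>l. of_nat (l+1)^2) q ((of_nat k)^2 :: rat)"
    by (simp add: NN_def)
  finally have ch: "GG m j k = (-1)^(k + (m-j)) * (of_nat k * NN (\<lambda>l. of_nat (l+1)^2) q ((of_nat k)^2 :: rat) / fact (2*q+1))" .
  have aux: "(s::rat)^(k'+r) * (x*N/F) = (s^r/F) * (s^k'*x) * N" for s k' r x N F
    by (simp add: power_add ac_simps)
  show ?thesis unfolding k_def[symmetric] q_def[symmetric] ch by (rule aux)
qed

lemma detY: "det (mat m m (\<lambda>(j,c). GG m j (K+1+c))) = Eprod m K"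
proof -
  have "mat m m (\<lambda>(j,c). GG m j (K+1+c)) = mat m m (\<lambda>(j,c). ((-1)^(m-j) / fact (2*(m-1-j)+1)) * ((-1)^(K+1+c) * of_nat (K+1+c))
     * NN (\<lambda>l. of_nat (l+1)^2) (m-1-j) (of_nat (K+1+c)^2))"
  proof (rule eq_matI)
    fix i j assume "i < dim_row (mat m m (\<lambda>(j,c). ((-1)^(m-j) / fact (2*(m-1-j)+1)) * ((-1)^(K+1+c) * of_nat (K+1+c))
     * NN (\<lambda>l. of_nat (l+1)^2) (m-1-j) ((of_nat (K+1+c)^2) :: rat)))"
      "j < dim_col (mat m m (\<lambda>(j,c). ((-1)^(m-j) / fact (2*(m-1-j)+1)) * ((-1)^(K+1+c) * of_nat (K+1+c))
     * NN (\<lambda>l. of_nat (l+1)^2) (m-1-j) ((of_nat (K+1+c)^2) :: rat)))"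
    then have ij: "i < m" "j < m" by auto
    show "mat m m (\<lambda>(j,c). GG m j (K+1+c)) $$ (i,j) = mat m m (\<lambda>(j,c). ((-1)^(m-j) / fact (2*(m-1-j)+1)) * ((-1)^(K+1+c) * of_nat (K+1+c))
     * NN (\<lambda>l. of_nat (l+1)^2) (m-1-j) ((of_nat (K+1+c)^2) :: rat)) $$ (i,j)"
      unfolding index_mat(1)[OF ij] case_prod_conv by (rule GG_Y[OF ij(1)])
  qed auto
  then have "det (mat m m (\<lambda>(j,c). GG m j (K+1+c))) = (\<Prod>j<m. (-1)^(m-j) / fact (2*(m-1-j)+1)) * (\<Prod>c<m. (-1)^(K+1+c) * of_nat (K+1+c))
     * det (mat m m (\<lambda>(j,c). NN (\<lambda>l. of_nat (l+1)^2) (m-1-j) ((of_nat (K+1+c)^2) :: rat)))"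
    using det_scale[where f="\<lambda>j. (-1)^(m-j) / fact (2*(m-1-j)+1)" and g="\<lambda>c. (-1)^(K+1+c) * of_nat (K+1+c)"
       and e="\<lambda>j c. NN (\<lambda>l. of_nat (l+1)^2) (m-1-j) ((of_nat (K+1+c)^2) :: rat)" and n=m] by simp
  also have "det (mat m m (\<lambda>(j,c). NN (\<lambda>l. of_nat (l+1)^2) (m-1-j) ((of_nat (K+1+c)^2) :: rat)))
     = (\<Prod>c<m. \<Prod>c'\<in>{c<..<m}. (of_nat (K+1+c)^2 - of_nat (K+1+c')^2))"
    by (rule vdm)
  also have "(\<Prod>j<m. ((-1::rat)^(m-j) / fact (2*(m-1-j)+1))) = (\<Prod>q<m. (-1)^(q+1) / fact (2*q+1))"
  proof -
    have "(\<Prod>j<m. ((-1::rat)^(m-j) / fact (2*(m-1-j)+1))) = (\<Prod>j<m. (\<lambda>q. (-1::rat)^(q+1) / fact (2*q+1)) (m-1-j))"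
    proof (rule prod.cong[OF refl])
      fix j assume "j \<in> {..<m}"
      then have "m - j = (m-1-j)+1" by simp
      then show "((-1::rat)^(m-j) / fact (2*(m-1-j)+1)) = (\<lambda>q. (-1::rat)^(q+1) / fact (2*q+1)) (m-1-j)"
        by (simp only:)
    qed
    then show ?thesis using prod_reflect[of "\<lambda>q. (-1::rat)^(q+1) / fact (2*q+1)" m] by (simp only:)
  qed
  finally show ?thesis unfolding Eprod_def .
qed


lemma detT: "det (mat (K+1) (K+1) (\<lambda>(u,k). GG m (u+m) k)) = 2^K"
proof -
  have "det (mat (K+1) (K+1) (\<lambda>(u,k). GG m (u+m) k)) = prod_list (diag_mat (mat (K+1) (K+1) (\<lambda>(u,k). GG m (u+m) k)))"
    by (rule det_lower_triangular[of "K+1"]) (auto simp: GG_low_zero)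
  also have "\<dots> = (\<Prod>u=0..<K+1. GG m (u+m) u)"
    unfolding prod_list_diag_prod by simp
  also have "\<dots> = (\<Prod>u<Suc K. (if u = 0 then 1 else 2))"
    by (simp add: GG_low_diag atLeast0LessThan)
  also have "\<dots> = 2^K"
    by (subst prod.lessThan_Suc_shift) simp
  finally show ?thesis .
qed

lemma detG: "det (mat (K+1+m) (K+1+m) (\<lambda>(j,k). GG m j k)) = (-1)^((K+1)*m) * 2^K * Eprod m K"
proof -
  define Gm where "Gm = mat (K+1+m) (K+1+m) (\<lambda>(j,k). GG m j k)"
  define T where "T = mat (K+1) (K+1) (\<lambda>(u,k). GG m (u+m) k)"
  define X where "X = mat m (K+1) (\<lambda>(j,k). GG m j k)"
  define Y where "Y = mat m m (\<lambda>(j,c). GG m j (K+1+c))"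
  have Gc: "Gm \<in> carrier_mat (K+1+m) (K+1+m)" by (simp add: Gm_def)
  have eq: "mat (K+1+m) (K+1+m) (\<lambda>(i,j). Gm $$ ((if i < K+1 then i + m else i - (K+1)), j))
     = four_block_mat T (0\<^sub>m (K+1) m) X Y"
  proof (rule eq_matI)
    fix i j assume i: "i < dim_row (four_block_mat T (0\<^sub>m (K+1) m) X Y)"
      and j: "j < dim_col (four_block_mat T (0\<^sub>m (K+1) m) X Y)"
    then have i': "i < K+1+m" and j': "j < K+1+m" by (auto simp: T_def Y_def)
    have rhs: "four_block_mat T (0\<^sub>m (K+1) m) X Y $$ (i,j) = (if i < K+1 then
      if j < K+1 then T $$ (i,j) else 0\<^sub>m (K+1) m $$ (i,j - (K+1))
      else if j < K+1 then X $$ (i - (K+1), j) else Y $$ (i - (K+1), j - (K+1)))"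
      using i' j' by (subst index_mat_four_block) (auto simp: T_def X_def Y_def)
    have lhs: "mat (K+1+m) (K+1+m) (\<lambda>(i,j). Gm $$ ((if i < K+1 then i + m else i - (K+1)), j)) $$ (i,j)
       = GG m (if i < K+1 then i + m else i - (K+1)) j"
      using i' j' by (auto simp: Gm_def)
    show "mat (K+1+m) (K+1+m) (\<lambda>(i,j). Gm $$ ((if i < K+1 then i + m else i - (K+1)), j)) $$ (i,j)
       = four_block_mat T (0\<^sub>m (K+1) m) X Y $$ (i,j)"
      unfolding lhs rhs
    proof (cases "i < K+1")
      case True
      show "GG m (if i < K+1 then i + m else i - (K+1)) j = (if i < K+1 then
      if j < K+1 then T $$ (i,j) else 0\<^sub>m (K+1) m $$ (i,j - (K+1))
      else if j < K+1 then X $$ (i - (K+1), j) else Y $$ (i - (K+1), j - (K+1)))"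
      proof (cases "j < K+1")
        case True
        then show ?thesis using \<open>i < K+1\<close> by (simp add: T_def)
      next
        case False
        then have "i < j" using \<open>i < K+1\<close> by simp
        then have "GG m (i + m) j = 0" by (rule GG_low_zero)
        then show ?thesis using \<open>i < K+1\<close> False j' by simp
      qed
    next
      case False
      then have im: "i - (K+1) < m" using i' by simp
      show "GG m (if i < K+1 then i + m else i - (K+1)) j = (if i < K+1 then
      if j < K+1 then T $$ (i,j) else 0\<^sub>m (K+1) m $$ (i,j - (K+1))
      else if j < K+1 then X $$ (i - (K+1), j) else Y $$ (i - (K+1), j - (K+1)))"
      proof (cases "j < K+1")
        case True
        then show ?thesis using False im by (simp add: X_def)
      next
        case False2: False
        then have jm: "j - (K+1) < m" and jj: "K+1+(j - (K+1)) = j" using j' by auto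
        show ?thesis using False False2 im jm by (simp add: Y_def jj)
      qed
    qed
  qed (auto simp: T_def Y_def)
  have "det Gm = (-1)^((K+1)*m) * det (mat (K+1+m) (K+1+m) (\<lambda>(i,j). Gm $$ ((if i < K+1 then i + m else i - (K+1)), j)))"
    by (rule det_swap_rows[OF Gc])
  also have "det (mat (K+1+m) (K+1+m) (\<lambda>(i,j). Gm $$ ((if i < K+1 then i + m else i - (K+1)), j))) = det T * det Y"
    unfolding eq by (rule det_four_block_mat_upper_right_zero[of _ "K+1" _ m]) (auto simp: T_def X_def Y_def)
  also have "det T = 2^K" unfolding T_def by (rule detT)
  also have "det Y = Eprod m K" unfolding Y_def by (rule detY)
  finally show ?thesis unfolding Gm_def by (simp add: ac_simps)
qed

lemma detM: "det (mat n n (\<lambda>(i,j). (of_int (B (int i + int j - int m)) :: rat))) = det (mat n n (\<lambda>(j,k). GG m j k))"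
proof -
  define Am where "Am = mat n n (\<lambda>(i,k). AA i k)"
  define Gm where "Gm = mat n n (\<lambda>(j,k). GG m j k)"
  have Ac: "Am \<in> carrier_mat n n" and Gc: "Gm\<^sup>T \<in> carrier_mat n n" by (auto simp: Am_def Gm_def)
  have eq: "mat n n (\<lambda>(i,j). (of_int (B (int i + int j - int m)) :: rat)) = Am * Gm\<^sup>T"
  proof (rule eq_matI)
    fix i j assume "i < dim_row (Am * Gm\<^sup>T)" "j < dim_col (Am * Gm\<^sup>T)"
    then have ij: "i < n" "j < n" by (auto simp: Am_def Gm_def)
    have "(Am * Gm\<^sup>T) $$ (i,j) = (\<Sum>k=0..<n. AA i k * GG m j k)"
      using ij by (simp add: Am_def Gm_def scalar_prod_def)
    also have "\<dots> = (\<Sum>k<n. AA i k * GG m j k)" by (simp add: atLeast0LessThan)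
    also have "\<dots> = of_int (B (int i + int j - int m))"
    proof (cases "int i + int j - int m < 0")
      case True then show ?thesis using entry_neg[OF True ij(1)] by simp
    next
      case False then show ?thesis using entry_pos[of i j m n] ij(1) by simp
    qed
    finally show "mat n n (\<lambda>(i,j). (of_int (B (int i + int j - int m)) :: rat)) $$ (i,j) = (Am * Gm\<^sup>T) $$ (i,j)"
      using ij by simp
  qed (auto simp: Am_def Gm_def)
  have detA: "det Am = 1"
  proof -
    have "det Am = prod_list (diag_mat Am)"
      by (rule det_lower_triangular[of n]) (auto simp: Am_def AA_def)
    also have "\<dots> = 1" unfolding prod_list_diag_prod by (simp add: Am_def AA_def)
    finally show ?thesis .
  qed
  have "det (Am * Gm\<^sup>T) = det Am * det (Gm\<^sup>T)" by (rule det_mult[OF Ac Gc])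
  also have "det (Gm\<^sup>T) = det Gm" by (rule det_transpose[of _ n]) (simp add: Gm_def)
  finally show ?thesis unfolding eq detA Gm_def by simp
qed

theorem theorem7:
  fixes m n :: nat
  assumes "m \<ge> 1"
  shows "(1 \<le> n \<and> n \<le> m \<longrightarrow> D (- int m) n = 0) \<and>
         (n \<ge> m + 1 \<longrightarrow>
            (of_int (D (- int m) n) :: rat) =
              (-1) ^ ((m + 1) choose 2) * 2 ^ (n - m - 1) * p (m + 1) (n - m - 1))"
proof (intro conjI impI)
  assume n: "1 \<le> n \<and> n \<le> m"
  define A where "A = mat n n (\<lambda>(i, j). B (int i + int j + - int m))"
  have Ac: "A \<in> carrier_mat n n" by (simp add: A_def)
  have "det A = (\<Sum>j<n. A $$ (0,j) * cofactor A 0 j)"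
    by (rule laplace_expansion_row[OF Ac]) (use n in simp)
  also have "\<dots> = 0"
  proof (rule sum.neutral, rule ballI)
    fix j assume "j \<in> {..<n}"
    then have "j < n" "int 0 + int j + - int m < 0" using n by auto
    then show "A $$ (0,j) * cofactor A 0 j = 0" using n by (simp add: A_def B_def)
  qed
  finally show "D (- int m) n = 0" by (simp add: D_def A_def)
next
  assume n: "n \<ge> m + 1"
  define K where "K = n - m - 1"
  have nK: "n = K+1+m" using n by (simp add: K_def)
  have e1: "(of_int (D (- int m) n) :: rat) = det (mat n n (\<lambda>(i,j). (of_int (B (int i + int j - int m)) :: rat)))"
  proof -
    have "(of_int (D (- int m) n) :: rat) = det (map_mat of_int (mat n n (\<lambda>(i, j). B (int i + int j + - int m))))"
      by (simp add: D_def of_int_hom.hom_det)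
    also have "map_mat of_int (mat n n (\<lambda>(i, j). B (int i + int j + - int m))) = mat n n (\<lambda>(i,j). (of_int (B (int i + int j - int m)) :: rat))"
      by (rule eq_matI) auto
    finally show ?thesis .
  qed
  have "(of_int (D (- int m) n) :: rat) = det (mat n n (\<lambda>(j,k). GG m j k))"
    unfolding e1 detM ..
  also have "\<dots> = (-1)^((K+1)*m) * 2^K * Eprod m K"
    unfolding nK by (rule detG)
  also have "\<dots> = 2^K * ((-1)^((K+1)*m) * Eprod m K)" by (simp only: ac_simps)
  also have "\<dots> = 2^K * ((-1)^((m+1) choose 2) * p (m+1) K)" by (simp only: final_id)
  finally show "(of_int (D (- int m) n) :: rat) = (-1) ^ ((m + 1) choose 2) * 2 ^ (n - m - 1) * p (m + 1) (n - m - 1)"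
    by (simp add: K_def ac_simps)
qed

end
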